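(* Let $U,V\in U(n-1)$ and $(\tau,t),(\sigma,s)\in\mathfrak{N}_n$. Let $T=R_UT_{(\tau,t)}$ and $S=R_VT_{(\sigma,s)}$. Then $S$ commutes with $T$ if and only if $VU=UV$ and $(V^*\tau,t)(\sigma,s)=(U^*\sigma,s)(\tau,t)$ in $\mathfrak{N}_n$.
   Context: The Heisenberg group $\mathfrak{N}_n$ is $\mathbb{C}^{n-1}\times\mathbb{R}$ with product $(\zeta_1,v_1)(\zeta_2,v_2)=(\zeta_1+\zeta_2,\,v_1+v_2+2\,\mathrm{Im}(\zeta_2^*\zeta_1))$. Work in $U(n,1)$ defined as the group of $(n+1)\times(n+1)$ complex matrices $g$ with $g^*Jg=J$, where $J=\begin{pmatrix}0&0&1\\0&I_{n-1}&0\\1&0&0\end{pmatrix}$. For $U\in U(n-1)$, $R_U=\mathrm{diag}(1,U,1)$ (Heisenberg rotation), and for $(\tau,t)\in\mathfrak{N}_n$, $T_{(\tau,t)}=\begin{pmatrix}1&-\tau^*&\frac{-|\tau|^2+ti}{2}\\0&I_{n-1}&\tau\\0&0&1\end{pmatrix}$ (Heisenberg translation). *)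

theory Defs
  imports Complex_Main "Jordan_Normal_Form.Matrix"
begin

text \<open>Throughout, m = n - 1 is the complex dimension of the Heisenberg group,
  so matrices in U(n,1) are (m+2) x (m+2), indexed 0..m+1.\<close>

definition ctrans :: "complex mat \<Rightarrow> complex mat" where
  "ctrans A = mat (dim_col A) (dim_row A) (\<lambda>(i,j). cnj (A $$ (j,i)))"

definition unitary_mat :: "nat \<Rightarrow> complex mat \<Rightarrow> bool" where
  "unitary_mat m U \<longleftrightarrow> U \<in> carrier_mat m m \<and> ctrans U * U = 1\<^sub>m m"

definition herm :: "complex vec \<Rightarrow> complex vec \<Rightarrow> complex" where
  "herm \<zeta>2 \<zeta>1 = (\<Sum>k<dim_vec \<zeta>1. cnj (\<zeta>2 $ k) * \<zeta>1 $ k)"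

definition heis_mult :: "complex vec \<times> real \<Rightarrow> complex vec \<times> real \<Rightarrow> complex vec \<times> real" where
  "heis_mult p q = (case p of (\<zeta>1, v1) \<Rightarrow> case q of (\<zeta>2, v2) \<Rightarrow>
      (\<zeta>1 + \<zeta>2, v1 + v2 + 2 * Im (herm \<zeta>2 \<zeta>1)))"

definition heis_rot :: "nat \<Rightarrow> complex mat \<Rightarrow> complex mat" where
  "heis_rot m U = mat (m+2) (m+2) (\<lambda>(i,j).
      if i = 0 \<or> i = m+1 then (if j = i then 1 else 0)
      else if j = 0 \<or> j = m+1 then 0
      else U $$ (i-1, j-1))"

definition heis_trans :: "nat \<Rightarrow> complex vec \<Rightarrow> real \<Rightarrow> complex mat" where
  "heis_trans m \<tau> t = mat (m+2) (m+2) (\<lambda>(i,j).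
      if i = 0 then
        (if j = 0 then 1
         else if j = m+1 then (- complex_of_real ((\<Sum>k<m. (cmod (\<tau> $ k))\<^sup>2)) + complex_of_real t * \<i>) / 2
         else - cnj (\<tau> $ (j-1)))
      else if i = m+1 then (if j = m+1 then 1 else 0)
      else if j = m+1 then \<tau> $ (i-1)
      else if j = i then 1 else 0)"

end

theory Submission imports Defs "Jordan_Normal_Form.Determinant" begin

lemma sum_split2: "(\<Sum>k<Suc (Suc m). f k) = f 0 + (\<Sum>k<m. f (Suc k)) + (f (Suc m)::'a::comm_monoid_add)"
proof -
  have "(\<Sum>k<Suc (Suc m). f k) = (\<Sum>k<Suc m. f k) + f (Suc m)" by simp
  also have "(\<Sum>k<Suc m. f k) = f 0 + (\<Sum>k<m. f (Suc k))" by (rule sum.lessThan_Suc_shift)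
  finally show ?thesis .
qed

definition blk :: "nat \<Rightarrow> complex \<Rightarrow> complex vec \<Rightarrow> complex mat \<Rightarrow> complex vec \<Rightarrow> complex mat" where
 "blk m a r W w = mat (m+2) (m+2) (\<lambda>(i,j). if i = 0 then (if j=0 then 1 else if j=m+1 then a else r$(j-1))
   else if i=m+1 then (if j=m+1 then 1 else 0) else if j=0 then 0 else if j=m+1 then w$(i-1) else W$$(i-1,j-1))"

lemma blk_dim[simp]: "dim_row (blk m a r W w) = Suc (Suc m)" "dim_col (blk m a r W w) = Suc (Suc m)"
  by (auto simp: blk_def)

lemma blk_idx[simp]:
  "blk m a r W w $$ (0,0) = 1"
  "l < m \<Longrightarrow> blk m a r W w $$ (0,Suc l) = r$l"
  "blk m a r W w $$ (0,Suc m) = a"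
  "k < m \<Longrightarrow> blk m a r W w $$ (Suc k,0) = 0"
  "k < m \<Longrightarrow> l < m \<Longrightarrow> blk m a r W w $$ (Suc k,Suc l) = W $$ (k,l)"
  "k < m \<Longrightarrow> blk m a r W w $$ (Suc k,Suc m) = w $ k"
  "blk m a r W w $$ (Suc m,0) = 0"
  "l < m \<Longrightarrow> blk m a r W w $$ (Suc m,Suc l) = 0"
  "blk m a r W w $$ (Suc m,Suc m) = 1"
  by (auto simp: blk_def)

lemma idx_cases: "i < Suc (Suc m) \<Longrightarrow> (i = 0 \<Longrightarrow> P) \<Longrightarrow> (i = Suc m \<Longrightarrow> P) \<Longrightarrow> (\<And>k. i = Suc k \<Longrightarrow> k < m \<Longrightarrow> P) \<Longrightarrow> P"
  by (cases i) (auto simp: less_Suc_eq)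

lemma blk_mult:
  assumes "W \<in> carrier_mat m m" "X \<in> carrier_mat m m" "r \<in> carrier_vec m" "q \<in> carrier_vec m"
    "w \<in> carrier_vec m" "x \<in> carrier_vec m"
  shows "blk m a r W w * blk m b q X x = blk m (b + r \<bullet> x + a) (q + transpose_mat X *\<^sub>v r) (W*X) (W *\<^sub>v x + w)"
proof (rule eq_matI)
  fix i j assume ij: "i < dim_row (blk m (b + r \<bullet> x + a) (q + transpose_mat X *\<^sub>v r) (W*X) (W *\<^sub>v x + w))" "j < dim_col (blk m (b + r \<bullet> x + a) (q + transpose_mat X *\<^sub>v r) (W*X) (W *\<^sub>v x + w))"
  hence i: "i < Suc (Suc m)" and j: "j < Suc (Suc m)" by auto
  have e: "(blk m a r W w * blk m b q X x) $$ (i,j) = (\<Sum>k<Suc (Suc m). blk m a r W w $$ (i,k) * blk m b q X x $$ (k,j))"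
    using i j by (simp add: index_mult_mat scalar_prod_def atLeast0LessThan)
  show "(blk m a r W w * blk m b q X x) $$ (i,j) = blk m (b + r \<bullet> x + a) (q + transpose_mat X *\<^sub>v r) (W*X) (W *\<^sub>v x + w) $$ (i,j)"
    unfolding e sum_split2
    apply (rule idx_cases[OF i]; rule idx_cases[OF j])
    using assms apply (simp_all add: mult_mat_vec_def scalar_prod_def atLeast0LessThan mult.commute)
    done
qed auto

lemma blk_eq:
  assumes "blk m a r W w = blk m a' r' W' w'"
   "W \<in> carrier_mat m m" "W' \<in> carrier_mat m m" "r \<in> carrier_vec m" "r' \<in> carrier_vec m"
    "w \<in> carrier_vec m" "w' \<in> carrier_vec m"
  shows "a = a' \<and> r = r' \<and> W = W' \<and> w = w'"
proof (intro conjI)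
  show "a = a'" using arg_cong[OF assms(1), of "\<lambda>M. M $$ (0, Suc m)"] by simp
  show "r = r'" proof (rule eq_vecI)
    fix l assume "l < dim_vec r'" thus "r $ l = r' $ l"
      using arg_cong[OF assms(1), of "\<lambda>M. M $$ (0, Suc l)"] assms(2-7) by simp
  qed (use assms in auto)
  show "w = w'" proof (rule eq_vecI)
    fix l assume "l < dim_vec w'" thus "w $ l = w' $ l"
      using arg_cong[OF assms(1), of "\<lambda>M. M $$ (Suc l, Suc m)"] assms(2-7) by simp
  qed (use assms in auto)
  show "W = W'" proof (rule eq_matI)
    fix k l assume "k < dim_row W'" "l < dim_col W'" thus "W $$ (k,l) = W' $$ (k,l)"
      using arg_cong[OF assms(1), of "\<lambda>M. M $$ (Suc k, Suc l)"] assms(2-7) by simp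
  qed (use assms in auto)
qed

definition cv :: "nat \<Rightarrow> complex vec \<Rightarrow> complex vec" where
  "cv m \<tau> = vec m (\<lambda>k. - cnj (\<tau> $ k))"

lemma cv_carrier[simp]: "cv m \<tau> \<in> carrier_vec m" by (simp add: cv_def)

lemma rot_blk: "U \<in> carrier_mat m m \<Longrightarrow> heis_rot m U = blk m 0 (0\<^sub>v m) U (0\<^sub>v m)"
  by (rule eq_matI) (auto simp: heis_rot_def blk_def)

lemma trans_blk: "heis_trans m \<tau> t = blk m ((- complex_of_real ((\<Sum>k<m. (cmod (\<tau> $ k))\<^sup>2)) + complex_of_real t * \<i>) / 2) (cv m \<tau>) (1\<^sub>m m) \<tau>"
  by (rule eq_matI) (auto simp: heis_trans_def blk_def cv_def)

lemma T_blk: assumes "U \<in> carrier_mat m m" "\<tau> \<in> carrier_vec m"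
  shows "heis_rot m U * heis_trans m \<tau> t = blk m ((- complex_of_real ((\<Sum>k<m. (cmod (\<tau> $ k))\<^sup>2)) + complex_of_real t * \<i>) / 2) (cv m \<tau>) U (U *\<^sub>v \<tau>)"
  using assms by (simp add: rot_blk trans_blk blk_mult)

lemma h_adj: assumes "A \<in> carrier_mat m m" "a \<in> carrier_vec m" "b \<in> carrier_vec m"
  shows "herm a (A *\<^sub>v b) = herm (ctrans A *\<^sub>v a) b"
proof -
  have "herm a (A *\<^sub>v b) = (\<Sum>k<m. \<Sum>l<m. cnj (a $ k) * (A $$ (k,l) * b $ l))"
    using assms by (simp add: herm_def mult_mat_vec_def scalar_prod_def atLeast0LessThan sum_distrib_left)
  also have "\<dots> = (\<Sum>l<m. \<Sum>k<m. cnj (a $ k) * (A $$ (k,l) * b $ l))" by (rule sum.swap)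
  also have "\<dots> = herm (ctrans A *\<^sub>v a) b"
    using assms by (simp add: herm_def mult_mat_vec_def ctrans_def scalar_prod_def atLeast0LessThan sum_distrib_left
       ac_simps)
  finally show ?thesis .
qed

lemma h_cnj: "dim_vec a = dim_vec b \<Longrightarrow> herm a b = cnj (herm b a)"
  by (simp add: herm_def mult.commute)

lemma h_add1: "dim_vec a = dim_vec c \<Longrightarrow> dim_vec b = dim_vec c \<Longrightarrow> herm (a + b) c = herm a c + herm b c"
  by (simp add: herm_def sum.distrib distrib_right)

lemma h_add2: "dim_vec b = dim_vec c \<Longrightarrow> herm a (b + c) = herm a b + herm a c"
  by (simp add: herm_def sum.distrib distrib_left)

lemma cv_scal: "x \<in> carrier_vec m \<Longrightarrow> cv m \<sigma> \<bullet> x = - herm \<sigma> x"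
  by (simp add: cv_def scalar_prod_def herm_def atLeast0LessThan sum_negf)

lemma cv_tr: assumes "V \<in> carrier_mat m m" "\<tau> \<in> carrier_vec m"
  shows "transpose_mat V *\<^sub>v cv m \<tau> = cv m (ctrans V *\<^sub>v \<tau>)"
  using assms by (intro eq_vecI) (auto simp: cv_def mult_mat_vec_def ctrans_def scalar_prod_def sum_negf mult.commute)

lemma cv_add: "a \<in> carrier_vec m \<Longrightarrow> b \<in> carrier_vec m \<Longrightarrow> cv m (a + b) = cv m a + cv m b"
  by (intro eq_vecI) (auto simp: cv_def)

lemma cv_inj: "a \<in> carrier_vec m \<Longrightarrow> b \<in> carrier_vec m \<Longrightarrow> cv m a = cv m b \<longleftrightarrow> a = b"
proof
  assume "a \<in> carrier_vec m" "b \<in> carrier_vec m" "cv m a = cv m b"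
  then show "a = b"
  proof (intro eq_vecI)
    fix i assume "i < dim_vec b"
    with \<open>cv m a = cv m b\<close> \<open>b \<in> carrier_vec m\<close> have "cv m a $ i = cv m b $ i" by simp
    thus "a $ i = b $ i" using \<open>i < dim_vec b\<close> \<open>b \<in> carrier_vec m\<close> by (simp add: cv_def)
  qed simp
qed simp

lemma ctrans_dim[simp]: "dim_row (ctrans U) = dim_col U" "dim_col (ctrans U) = dim_row U"
  by (simp_all add: ctrans_def)

lemma ctrans_carrier[simp]: "U \<in> carrier_mat m m \<Longrightarrow> ctrans U \<in> carrier_mat m m"
  by (rule carrier_matI) auto

lemma unit_right: "unitary_mat m U \<Longrightarrow> U * ctrans U = 1\<^sub>m m"
  unfolding unitary_mat_def by (intro mat_mult_left_right_inverse[of "ctrans U" m]) auto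

lemma ctrans_mv_carrier[simp]: "U \<in> carrier_mat m m \<Longrightarrow> ctrans U *\<^sub>v v \<in> carrier_vec m"
  by (rule carrier_vecI) (auto)

lemma mv_unit: "U \<in> carrier_mat m m \<Longrightarrow> U * ctrans U = 1\<^sub>m m \<Longrightarrow> v \<in> carrier_vec m \<Longrightarrow> U *\<^sub>v (ctrans U *\<^sub>v v) = v"
  using assoc_mult_mat_vec[of U m m "ctrans U" m v] by simp

lemma C4_lem:
  assumes U: "U \<in> carrier_mat m m" and V: "V \<in> carrier_mat m m"
    and UU: "U * ctrans U = 1\<^sub>m m" and VV: "V * ctrans V = 1\<^sub>m m"
    and t: "\<tau> \<in> carrier_vec m" and s: "\<sigma> \<in> carrier_vec m"
    and H1: "ctrans V *\<^sub>v \<tau> + \<sigma> = ctrans U *\<^sub>v \<sigma> + \<tau>"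
    and C1: "V * U = U * V"
  shows "V *\<^sub>v (U *\<^sub>v \<tau>) + V *\<^sub>v \<sigma> = U *\<^sub>v (V *\<^sub>v \<sigma>) + U *\<^sub>v \<tau>"
proof -
  have "(U * V) *\<^sub>v (ctrans V *\<^sub>v \<tau> + \<sigma>) = (U * V) *\<^sub>v (ctrans U *\<^sub>v \<sigma> + \<tau>)" using H1 by simp
  moreover have "(U * V) *\<^sub>v (ctrans V *\<^sub>v \<tau> + \<sigma>) = U *\<^sub>v \<tau> + U *\<^sub>v (V *\<^sub>v \<sigma>)"
  proof -
    have "(U * V) *\<^sub>v (ctrans V *\<^sub>v \<tau> + \<sigma>) = (U * V) *\<^sub>v (ctrans V *\<^sub>v \<tau>) + (U * V) *\<^sub>v \<sigma>"
      using U V t s by (intro mult_add_distrib_mat_vec[of _ m m]) auto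
    also have "(U * V) *\<^sub>v (ctrans V *\<^sub>v \<tau>) = U *\<^sub>v (V *\<^sub>v (ctrans V *\<^sub>v \<tau>))"
      using U V t by (simp add: assoc_mult_mat_vec[of U m m V m])
    also have "\<dots> = U *\<^sub>v \<tau>" using V VV t by (simp add: mv_unit)
    finally show ?thesis using U V s by simp
  qed
  moreover have "(U * V) *\<^sub>v (ctrans U *\<^sub>v \<sigma> + \<tau>) = V *\<^sub>v \<sigma> + V *\<^sub>v (U *\<^sub>v \<tau>)"
  proof -
    have "(U * V) *\<^sub>v (ctrans U *\<^sub>v \<sigma> + \<tau>) = (V * U) *\<^sub>v (ctrans U *\<^sub>v \<sigma>) + (V * U) *\<^sub>v \<tau>"
      unfolding C1[symmetric] using U V t s by (intro mult_add_distrib_mat_vec[of _ m m]) auto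
    also have "(V * U) *\<^sub>v (ctrans U *\<^sub>v \<sigma>) = V *\<^sub>v (U *\<^sub>v (ctrans U *\<^sub>v \<sigma>))"
      using U V s by (simp add: assoc_mult_mat_vec[of V m m U m])
    also have "\<dots> = V *\<^sub>v \<sigma>" using U UU s by (simp add: mv_unit)
    finally show ?thesis using U V t by simp
  qed
  ultimately have "U *\<^sub>v \<tau> + U *\<^sub>v (V *\<^sub>v \<sigma>) = V *\<^sub>v \<sigma> + V *\<^sub>v (U *\<^sub>v \<tau>)" by simp
  moreover have "U *\<^sub>v \<tau> + U *\<^sub>v (V *\<^sub>v \<sigma>) = U *\<^sub>v (V *\<^sub>v \<sigma>) + U *\<^sub>v \<tau>"
    using U V t s by (intro comm_add_vec[of _ m]) auto
  moreover have "V *\<^sub>v \<sigma> + V *\<^sub>v (U *\<^sub>v \<tau>) = V *\<^sub>v (U *\<^sub>v \<tau>) + V *\<^sub>v \<sigma>"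
    using U V t s by (intro comm_add_vec[of _ m]) auto
  ultimately show ?thesis by simp
qed

lemma h_unit: assumes U: "U \<in> carrier_mat m m" and UU: "U * ctrans U = 1\<^sub>m m" and s: "\<sigma> \<in> carrier_vec m"
  shows "herm (ctrans U *\<^sub>v \<sigma>) (ctrans U *\<^sub>v \<sigma>) = herm \<sigma> \<sigma>"
proof -
  have "herm \<sigma> (U *\<^sub>v (ctrans U *\<^sub>v \<sigma>)) = herm (ctrans U *\<^sub>v \<sigma>) (ctrans U *\<^sub>v \<sigma>)"
    using U s by (intro h_adj) auto
  moreover have "U *\<^sub>v (ctrans U *\<^sub>v \<sigma>) = \<sigma>" using U UU s by (rule mv_unit)
  ultimately show ?thesis by simp
qed

lemma Re_lem:
  assumes U: "U \<in> carrier_mat m m" and V: "V \<in> carrier_mat m m"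
    and UU: "U * ctrans U = 1\<^sub>m m" and VV: "V * ctrans V = 1\<^sub>m m"
    and t: "\<tau> \<in> carrier_vec m" and s: "\<sigma> \<in> carrier_vec m"
    and H1: "ctrans V *\<^sub>v \<tau> + \<sigma> = ctrans U *\<^sub>v \<sigma> + \<tau>"
  shows "Re (herm \<tau> (ctrans U *\<^sub>v \<sigma>)) = Re (herm \<sigma> (ctrans V *\<^sub>v \<tau>))"
proof -
  define p where "p = ctrans U *\<^sub>v \<sigma>"
  define q where "q = ctrans V *\<^sub>v \<tau>"
  have p: "p \<in> carrier_vec m" and q: "q \<in> carrier_vec m" using U V s t by (auto simp: p_def q_def)
  have e1: "herm (p + \<tau>) (p + \<tau>) = herm \<sigma> \<sigma> + herm \<tau> \<tau> + (herm \<tau> p + cnj (herm \<tau> p))"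
  proof -
    have "herm (p + \<tau>) (p + \<tau>) = herm p p + herm p \<tau> + (herm \<tau> p + herm \<tau> \<tau>)"
    proof -
      have "herm (p + \<tau>) (p + \<tau>) = herm p (p + \<tau>) + herm \<tau> (p + \<tau>)"
        by (rule h_add1) (use p t in auto)
      also have "herm p (p + \<tau>) = herm p p + herm p \<tau>" by (rule h_add2) (use p t in auto)
      also have "herm \<tau> (p + \<tau>) = herm \<tau> p + herm \<tau> \<tau>" by (rule h_add2) (use p t in auto)
      finally show ?thesis .
    qed
    moreover have "herm p p = herm \<sigma> \<sigma>" unfolding p_def using U UU s by (rule h_unit)
    moreover have "herm p \<tau> = cnj (herm \<tau> p)" using p t by (intro h_cnj) simp
    ultimately show ?thesis by simp
  qed
  have e2: "herm (q + \<sigma>) (q + \<sigma>) = herm \<sigma> \<sigma> + herm \<tau> \<tau> + (herm \<sigma> q + cnj (herm \<sigma> q))"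
  proof -
    have "herm (q + \<sigma>) (q + \<sigma>) = herm q q + herm q \<sigma> + (herm \<sigma> q + herm \<sigma> \<sigma>)"
    proof -
      have "herm (q + \<sigma>) (q + \<sigma>) = herm q (q + \<sigma>) + herm \<sigma> (q + \<sigma>)"
        by (rule h_add1) (use q s in auto)
      also have "herm q (q + \<sigma>) = herm q q + herm q \<sigma>" by (rule h_add2) (use q s in auto)
      also have "herm \<sigma> (q + \<sigma>) = herm \<sigma> q + herm \<sigma> \<sigma>" by (rule h_add2) (use q s in auto)
      finally show ?thesis .
    qed
    moreover have "herm q q = herm \<tau> \<tau>" unfolding q_def using V VV t by (rule h_unit)
    moreover have "herm q \<sigma> = cnj (herm \<sigma> q)" using q s by (intro h_cnj) simp
    ultimately show ?thesis by simp
  qed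
  have "q + \<sigma> = p + \<tau>" using H1 by (simp add: p_def q_def)
  with e1 e2 have "herm \<tau> p + cnj (herm \<tau> p) = herm \<sigma> q + cnj (herm \<sigma> q)" by simp
  then show ?thesis unfolding complex_add_cnj p_def q_def by simp
qed



theorem lemma3p2:
  fixes m :: nat and U V :: "complex mat" and \<tau> \<sigma> :: "complex vec" and t s :: real
  assumes "unitary_mat m U" and "unitary_mat m V"
    and "\<tau> \<in> carrier_vec m" and "\<sigma> \<in> carrier_vec m"
  defines "T \<equiv> heis_rot m U * heis_trans m \<tau> t"
    and "S \<equiv> heis_rot m V * heis_trans m \<sigma> s"
  shows "S * T = T * S \<longleftrightarrow>
    (V * U = U * V \<and>
     heis_mult (ctrans V *\<^sub>v \<tau>, t) (\<sigma>, s) = heis_mult (ctrans U *\<^sub>v \<sigma>, s) (\<tau>, t))"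
proof -
  have U: "U \<in> carrier_mat m m" and V: "V \<in> carrier_mat m m"
    using assms(1,2) by (auto simp: unitary_mat_def)
  have UU: "U * ctrans U = 1\<^sub>m m" and VV: "V * ctrans V = 1\<^sub>m m"
    using assms(1,2) by (auto intro: unit_right)
  have tc: "\<tau> \<in> carrier_vec m" and sc: "\<sigma> \<in> carrier_vec m" by fact+
  define aT where "aT = (- complex_of_real ((\<Sum>k<m. (cmod (\<tau> $ k))\<^sup>2)) + complex_of_real t * \<i>) / 2"
  define aS where "aS = (- complex_of_real ((\<Sum>k<m. (cmod (\<sigma> $ k))\<^sup>2)) + complex_of_real s * \<i>) / 2"
  have Tb: "T = blk m aT (cv m \<tau>) U (U *\<^sub>v \<tau>)" unfolding T_def aT_def using U tc by (rule T_blk)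
  have Sb: "S = blk m aS (cv m \<sigma>) V (V *\<^sub>v \<sigma>)" unfolding S_def aS_def using V sc by (rule T_blk)
  have ST: "S * T = blk m (aT + cv m \<sigma> \<bullet> (U *\<^sub>v \<tau>) + aS) (cv m \<tau> + transpose_mat U *\<^sub>v cv m \<sigma>) (V * U) (V *\<^sub>v (U *\<^sub>v \<tau>) + V *\<^sub>v \<sigma>)"
    unfolding Tb Sb using U V tc sc by (intro blk_mult) auto
  have TS: "T * S = blk m (aS + cv m \<tau> \<bullet> (V *\<^sub>v \<sigma>) + aT) (cv m \<sigma> + transpose_mat V *\<^sub>v cv m \<tau>) (U * V) (U *\<^sub>v (V *\<^sub>v \<sigma>) + U *\<^sub>v \<tau>)"
    unfolding Tb Sb using U V tc sc by (intro blk_mult) auto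
  define A where "A = herm \<tau> (ctrans U *\<^sub>v \<sigma>)"
  define B where "B = herm \<sigma> (ctrans V *\<^sub>v \<tau>)"
  have e3a: "cv m \<sigma> \<bullet> (U *\<^sub>v \<tau>) = - cnj A"
  proof -
    have "cv m \<sigma> \<bullet> (U *\<^sub>v \<tau>) = - herm \<sigma> (U *\<^sub>v \<tau>)" using U tc by (intro cv_scal) auto
    also have "herm \<sigma> (U *\<^sub>v \<tau>) = herm (ctrans U *\<^sub>v \<sigma>) \<tau>" using U sc tc by (rule h_adj)
    also have "\<dots> = cnj A" unfolding A_def using U tc by (intro h_cnj) auto
    finally show ?thesis .
  qed
  have e3b: "cv m \<tau> \<bullet> (V *\<^sub>v \<sigma>) = - cnj B"
  proof -
    have "cv m \<tau> \<bullet> (V *\<^sub>v \<sigma>) = - herm \<tau> (V *\<^sub>v \<sigma>)" using V sc by (intro cv_scal) auto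
    also have "herm \<tau> (V *\<^sub>v \<sigma>) = herm (ctrans V *\<^sub>v \<tau>) \<sigma>" using V tc sc by (rule h_adj)
    also have "\<dots> = cnj B" unfolding B_def using V sc by (intro h_cnj) auto
    finally show ?thesis .
  qed
  have ea: "aT + cv m \<sigma> \<bullet> (U *\<^sub>v \<tau>) + aS = aS + cv m \<tau> \<bullet> (V *\<^sub>v \<sigma>) + aT \<longleftrightarrow> A = B"
    unfolding e3a e3b by (auto simp: algebra_simps)
  have e2: "cv m \<tau> + transpose_mat U *\<^sub>v cv m \<sigma> = cv m \<sigma> + transpose_mat V *\<^sub>v cv m \<tau> \<longleftrightarrow>
      ctrans V *\<^sub>v \<tau> + \<sigma> = ctrans U *\<^sub>v \<sigma> + \<tau>"
  proof -
    have "cv m \<tau> + transpose_mat U *\<^sub>v cv m \<sigma> = cv m (\<tau> + ctrans U *\<^sub>v \<sigma>)"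
      using U tc sc by (simp add: cv_tr cv_add)
    moreover have "cv m \<sigma> + transpose_mat V *\<^sub>v cv m \<tau> = cv m (\<sigma> + ctrans V *\<^sub>v \<tau>)"
      using V tc sc by (simp add: cv_tr cv_add)
    moreover have "\<tau> + ctrans U *\<^sub>v \<sigma> = ctrans U *\<^sub>v \<sigma> + \<tau>" using U tc by (intro comm_add_vec[of _ m]) auto
    moreover have "\<sigma> + ctrans V *\<^sub>v \<tau> = ctrans V *\<^sub>v \<tau> + \<sigma>" using V sc by (intro comm_add_vec[of _ m]) auto
    moreover have "cv m (\<tau> + ctrans U *\<^sub>v \<sigma>) = cv m (\<sigma> + ctrans V *\<^sub>v \<tau>) \<longleftrightarrow> \<tau> + ctrans U *\<^sub>v \<sigma> = \<sigma> + ctrans V *\<^sub>v \<tau>"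
      using U V tc sc by (intro cv_inj) auto
    ultimately show ?thesis by auto
  qed
  have hm: "heis_mult (ctrans V *\<^sub>v \<tau>, t) (\<sigma>, s) = heis_mult (ctrans U *\<^sub>v \<sigma>, s) (\<tau>, t) \<longleftrightarrow>
      (ctrans V *\<^sub>v \<tau> + \<sigma> = ctrans U *\<^sub>v \<sigma> + \<tau> \<and> Im B = Im A)"
    by (simp add: heis_mult_def A_def B_def)
  have eqv: "S * T = T * S \<longleftrightarrow> (aT + cv m \<sigma> \<bullet> (U *\<^sub>v \<tau>) + aS = aS + cv m \<tau> \<bullet> (V *\<^sub>v \<sigma>) + aT \<and>
     cv m \<tau> + transpose_mat U *\<^sub>v cv m \<sigma> = cv m \<sigma> + transpose_mat V *\<^sub>v cv m \<tau> \<and> V * U = U * V \<and>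
     V *\<^sub>v (U *\<^sub>v \<tau>) + V *\<^sub>v \<sigma> = U *\<^sub>v (V *\<^sub>v \<sigma>) + U *\<^sub>v \<tau>)"
  proof
    assume "S * T = T * S"
    then show "(aT + cv m \<sigma> \<bullet> (U *\<^sub>v \<tau>) + aS = aS + cv m \<tau> \<bullet> (V *\<^sub>v \<sigma>) + aT \<and>
     cv m \<tau> + transpose_mat U *\<^sub>v cv m \<sigma> = cv m \<sigma> + transpose_mat V *\<^sub>v cv m \<tau> \<and> V * U = U * V \<and>
     V *\<^sub>v (U *\<^sub>v \<tau>) + V *\<^sub>v \<sigma> = U *\<^sub>v (V *\<^sub>v \<sigma>) + U *\<^sub>v \<tau>)"
      unfolding ST TS using U V tc sc by (intro blk_eq) auto
  qed (simp add: ST TS add.commute add.left_commute)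
  show ?thesis
  proof
    assume "S * T = T * S"
    with eqv ea e2 hm show "V * U = U * V \<and>
     heis_mult (ctrans V *\<^sub>v \<tau>, t) (\<sigma>, s) = heis_mult (ctrans U *\<^sub>v \<sigma>, s) (\<tau>, t)" by auto
  next
    assume R: "V * U = U * V \<and>
     heis_mult (ctrans V *\<^sub>v \<tau>, t) (\<sigma>, s) = heis_mult (ctrans U *\<^sub>v \<sigma>, s) (\<tau>, t)"
    hence C1: "V * U = U * V" and H1: "ctrans V *\<^sub>v \<tau> + \<sigma> = ctrans U *\<^sub>v \<sigma> + \<tau>" and Im: "Im B = Im A"
      using hm by auto
    have "Re A = Re B" unfolding A_def B_def using U V UU VV tc sc H1 by (rule Re_lem)
    with Im have "A = B" by (simp add: complex_eq_iff)
    moreover have "V *\<^sub>v (U *\<^sub>v \<tau>) + V *\<^sub>v \<sigma> = U *\<^sub>v (V *\<^sub>v \<sigma>) + U *\<^sub>v \<tau>"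
      using U V UU VV tc sc H1 C1 by (rule C4_lem)
    ultimately show "S * T = T * S" using eqv ea e2 H1 C1 by auto
  qed
qed

end
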